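(* Let $n\ge1$, $a\in\mathcal{IS}_n$, and consider the semigroup $(\mathcal{IS}_n,*_a)$. Let $x\in\mathcal{IS}_n$. If $\operatorname{dom}(x)\subseteq\operatorname{ran}(a)$, then the $\mathcal{L}$-class of $x$ is $$L_x=\{y\in\mathcal{IS}_n : \operatorname{ran}(y)=\operatorname{ran}(x),\ \operatorname{dom}(y)\subseteq\operatorname{ran}(a)\};$$ otherwise $L_x=\{x\}$.
   Context: $\mathcal{IS}_n$ is the set of all partial injective maps of $N=\{1,\dots,n\}$, including the empty map; $\operatorname{dom}(x)$, $\operatorname{ran}(x)$ denote domain and range. Maps are composed from left to right: $(xy)(i)=y(x(i))$, defined exactly when $i\in\operatorname{dom}(x)$ and $x(i)\in\operatorname{dom}(y)$. For fixed $a\in\mathcal{IS}_n$, $x*_a y:=xay$. Green's relations in a semigroup $S$: with $S^1$ the semigroup $S$ with an identity adjoined, $x\mathcal{L}y$ iff $S^1x=S^1y$, $x\mathcal{R}y$ iff $xS^1=yS^1$, $\mathcal{H}=\mathcal{L}\cap\mathcal{R}$, $\mathcal{D}=\mathcal{L}\circ\mathcal{R}$ (which equals $\mathcal{R}\circ\mathcal{L}$). $L_x,R_x,H_x,D_x$ denote the corresponding classes of $x$, here computed in $(\mathcal{IS}_n,*_a)$. *)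

theory Defs
  imports Main
begin

definition IS :: "nat \<Rightarrow> (nat \<Rightarrow> nat option) set" where
  "IS n = {f. dom f \<subseteq> {1..n} \<and> ran f \<subseteq> {1..n} \<and> inj_on f (dom f)}"

text \<open>Left-to-right composition: (x ; y)(i) = y(x(i)).\<close>
definition pcomp :: "(nat \<Rightarrow> nat option) \<Rightarrow> (nat \<Rightarrow> nat option) \<Rightarrow> (nat \<Rightarrow> nat option)" where
  "pcomp x y = y \<circ>\<^sub>m x"

definition sandwich :: "(nat \<Rightarrow> nat option) \<Rightarrow> (nat \<Rightarrow> nat option) \<Rightarrow> (nat \<Rightarrow> nat option) \<Rightarrow> (nat \<Rightarrow> nat option)" where
  "sandwich a x y = pcomp (pcomp x a) y"

text \<open>Green's L relation in a semigroup (S, mult): S^1 x = S^1 y.\<close>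
definition left_ideal1 :: "'a set \<Rightarrow> ('a \<Rightarrow> 'a \<Rightarrow> 'a) \<Rightarrow> 'a \<Rightarrow> 'a set" where
  "left_ideal1 S mult x = insert x ((\<lambda>s. mult s x) ` S)"

definition greenL :: "'a set \<Rightarrow> ('a \<Rightarrow> 'a \<Rightarrow> 'a) \<Rightarrow> 'a \<Rightarrow> 'a \<Rightarrow> bool" where
  "greenL S mult x y \<longleftrightarrow> left_ideal1 S mult x = left_ideal1 S mult y"

definition L_class :: "'a set \<Rightarrow> ('a \<Rightarrow> 'a \<Rightarrow> 'a) \<Rightarrow> 'a \<Rightarrow> 'a set" where
  "L_class S mult x = {y \<in> S. greenL S mult x y}"

end

theory Submission
  imports Defs
begin

definition RR :: "(nat \<Rightarrow> nat option) \<Rightarrow> (nat \<Rightarrow> nat option) \<Rightarrow> nat set" where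
  "RR a x = {v. \<exists>j. j \<in> ran a \<and> x j = Some v}"

lemma inj_dom: "f \<in> IS n \<Longrightarrow> f i = Some v \<Longrightarrow> f j = Some v \<Longrightarrow> i = j"
proof -
  assume "f \<in> IS n" "f i = Some v" "f j = Some v"
  moreover have "inj_on f (dom f)" using \<open>f \<in> IS n\<close> by (simp add: IS_def)
  moreover have "i \<in> dom f" "j \<in> dom f" using calculation by auto
  ultimately show "i = j" by (metis inj_onD)
qed

lemma sw_app: "sandwich a s x i = (case s i of None \<Rightarrow> None | Some k \<Rightarrow>
   (case a k of None \<Rightarrow> None | Some j \<Rightarrow> x j))"
  by (simp add: sandwich_def pcomp_def map_comp_def split: option.splits)

lemma sw_IS:
  assumes "a \<in> IS n" "x \<in> IS n" "s \<in> IS n"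
  shows "sandwich a s x \<in> IS n \<and> ran (sandwich a s x) \<subseteq> RR a x"
proof -
  let ?z = "sandwich a s x"
  have dz: "dom ?z \<subseteq> dom s" by (auto simp: sw_app split: option.splits)
  have rz: "ran ?z \<subseteq> RR a x"
  proof
    fix v assume "v \<in> ran ?z"
    then obtain i where "?z i = Some v" by (auto simp: ran_def)
    then obtain k j where "s i = Some k" "a k = Some j" "x j = Some v"
      by (auto simp: sw_app split: option.splits)
    thus "v \<in> RR a x" by (auto simp: RR_def ran_def)
  qed
  have "RR a x \<subseteq> ran x" by (auto simp: RR_def ran_def)
  moreover have inj: "inj_on ?z (dom ?z)"
  proof (rule inj_onI)
    fix i1 i2 assume h: "i1 \<in> dom ?z" "i2 \<in> dom ?z" "?z i1 = ?z i2"
    from h(1) obtain k1 j1 v where 1: "s i1 = Some k1" "a k1 = Some j1" "x j1 = Some v"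
      by (auto simp: sw_app split: option.splits)
    from h(2) obtain k2 j2 w where 2: "s i2 = Some k2" "a k2 = Some j2" "x j2 = Some w"
      by (auto simp: sw_app split: option.splits)
    from h(3) 1 2 have "v = w" by (simp add: sw_app)
    with 1 2 have "j1 = j2" using inj_dom[OF assms(2), of j1 w j2] by simp
    with 1 2 have "k1 = k2" using inj_dom[OF assms(1), of k1 j1 k2] by simp
    with 1 2 show "i1 = i2" using inj_dom[OF assms(3), of i1 k1 i2] by simp
  qed
  moreover have "dom ?z \<subseteq> {1..n}" using dz assms(3) unfolding IS_def by blast
  moreover have "ran ?z \<subseteq> {1..n}" using rz \<open>RR a x \<subseteq> ran x\<close> assms(2) unfolding IS_def by blast
  ultimately show ?thesis using rz unfolding IS_def by blast
qed

lemma ideal_char: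
  assumes "a \<in> IS n" "x \<in> IS n"
  shows "(\<lambda>s. sandwich a s x) ` IS n = {z \<in> IS n. ran z \<subseteq> RR a x}"
proof
  show "(\<lambda>s. sandwich a s x) ` IS n \<subseteq> {z \<in> IS n. ran z \<subseteq> RR a x}"
    using sw_IS[OF assms] by blast
next
  show "{z \<in> IS n. ran z \<subseteq> RR a x} \<subseteq> (\<lambda>s. sandwich a s x) ` IS n"
  proof
    fix z assume "z \<in> {z \<in> IS n. ran z \<subseteq> RR a x}"
    hence zI: "z \<in> IS n" and zr: "ran z \<subseteq> RR a x" by auto
    define P where "P v k = (\<exists>j. a k = Some j \<and> x j = Some v)" for v k
    define s where "s i = (case z i of None \<Rightarrow> None | Some v \<Rightarrow> Some (SOME k. P v k))" for i
    have ex: "z i = Some v \<Longrightarrow> P v (SOME k. P v k)" for i v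
    proof -
      assume "z i = Some v"
      hence "v \<in> RR a x" using zr by (auto simp: ran_def)
      then obtain j k where "a k = Some j" "x j = Some v" by (auto simp: RR_def ran_def)
      hence "P v k" by (auto simp: P_def)
      thus ?thesis by (rule someI)
    qed
    have eq: "sandwich a s x = z"
    proof
      fix i show "sandwich a s x i = z i"
      proof (cases "z i")
        case None thus ?thesis by (simp add: sw_app s_def)
      next
        case (Some v)
        from ex[OF Some] obtain j where "a (SOME k. P v k) = Some j" "x j = Some v"
          by (auto simp: P_def)
        thus ?thesis using Some by (simp add: sw_app s_def)
      qed
    qed
    have "s \<in> IS n"
    proof -
      have "dom s = dom z" by (auto simp: s_def split: option.splits)
      moreover have "ran s \<subseteq> dom a"
      proof
        fix k assume "k \<in> ran s"
        then obtain i where "s i = Some k" by (auto simp: ran_def)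
        then obtain v where "z i = Some v" "k = (SOME k. P v k)" by (auto simp: s_def split: option.splits)
        with ex show "k \<in> dom a" by (auto simp: P_def)
      qed
      moreover have "inj_on s (dom s)"
      proof (rule inj_onI)
        fix i1 i2 assume h: "i1 \<in> dom s" "i2 \<in> dom s" "s i1 = s i2"
        then obtain v w where vw: "z i1 = Some v" "z i2 = Some w"
          by (auto simp: s_def split: option.splits)
        from h(3) vw have "(SOME k. P v k) = (SOME k. P w k)" by (simp add: s_def)
        with ex[OF vw(1)] ex[OF vw(2)] have "v = w" by (auto simp: P_def)
        with vw show "i1 = i2" using inj_dom[OF zI, of i1 w i2] by simp
      qed
      ultimately show ?thesis using zI assms(1) unfolding IS_def by auto
    qed
    with eq show "z \<in> (\<lambda>s. sandwich a s x) ` IS n" by blast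
  qed
qed

lemma RR_sub: "RR a x \<subseteq> ran x" by (auto simp: RR_def ran_def)

lemma RR_eq: "dom x \<subseteq> ran a \<Longrightarrow> RR a x = ran x"
proof
  assume d: "dom x \<subseteq> ran a"
  show "ran x \<subseteq> RR a x"
  proof
    fix v assume "v \<in> ran x"
    then obtain j where j: "x j = Some v" by (auto simp: ran_def)
    hence "j \<in> ran a" using d by blast
    with j show "v \<in> RR a x" by (auto simp: RR_def)
  qed
qed (rule RR_sub)

lemma RR_ss: "x \<in> IS n \<Longrightarrow> ran y \<subseteq> RR a x \<Longrightarrow> y \<in> IS n \<Longrightarrow> ran x \<subseteq> RR a y \<Longrightarrow> dom y \<subseteq> ran a"
proof
  fix i assume x: "x \<in> IS n" and 1: "ran y \<subseteq> RR a x" and y: "y \<in> IS n"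
    and 2: "ran x \<subseteq> RR a y" and i: "i \<in> dom y"
  then obtain v where v: "y i = Some v" by auto
  hence "v \<in> RR a x" using 1 by (auto simp: ran_def)
  hence "v \<in> ran x" using RR_sub by blast
  hence "v \<in> RR a y" using 2 by blast
  then obtain j where "j \<in> ran a" "y j = Some v" by (auto simp: RR_def)
  with v have "i = j" using inj_dom[OF y, of i v j] by simp
  with \<open>j \<in> ran a\<close> show "i \<in> ran a" by simp
qed

theorem theorem4:
  fixes n :: nat and a x :: "nat \<Rightarrow> nat option"
  assumes "n \<ge> 1" and "a \<in> IS n" and "x \<in> IS n"
  shows "(dom x \<subseteq> ran a \<longrightarrow>
            L_class (IS n) (sandwich a) x = {y \<in> IS n. ran y = ran x \<and> dom y \<subseteq> ran a})
       \<and> (\<not> dom x \<subseteq> ran a \<longrightarrow> L_class (IS n) (sandwich a) x = {x})"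
proof -
  define I where "I y = insert y {z \<in> IS n. ran z \<subseteq> RR a y}" for y
  have LI: "y \<in> IS n \<Longrightarrow> left_ideal1 (IS n) (sandwich a) y = I y" for y
    unfolding I_def left_ideal1_def using ideal_char[OF assms(2), of y] by simp
  have key: "y \<in> L_class (IS n) (sandwich a) x \<longleftrightarrow> y \<in> IS n \<and> I x = I y" for y
  proof -
    have "y \<in> L_class (IS n) (sandwich a) x \<longleftrightarrow> y \<in> IS n \<and>
       left_ideal1 (IS n) (sandwich a) x = left_ideal1 (IS n) (sandwich a) y"
      unfolding L_class_def greenL_def by simp
    thus ?thesis using LI[of y] LI[OF assms(3)] by blast
  qed
  have fwd: "ran y \<subseteq> RR a x \<and> ran x \<subseteq> RR a y"
    if y: "y \<in> IS n" and ne: "y \<noteq> x" and e: "I x = I y" for y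
  proof -
    have "y \<in> I y" unfolding I_def by simp
    hence "y \<in> insert x {z \<in> IS n. ran z \<subseteq> RR a x}" using e unfolding I_def by simp
    hence 1: "ran y \<subseteq> RR a x" using ne by simp
    have "x \<in> I x" unfolding I_def by simp
    hence "x \<in> insert y {z \<in> IS n. ran z \<subseteq> RR a y}" using e unfolding I_def by simp
    hence 2: "ran x \<subseteq> RR a y" using ne by simp
    from 1 2 show ?thesis by simp
  qed
  show ?thesis
  proof (intro conjI impI)
    assume dx: "dom x \<subseteq> ran a"
    show "L_class (IS n) (sandwich a) x = {y \<in> IS n. ran y = ran x \<and> dom y \<subseteq> ran a}"
    proof (intro set_eqI iffI)
      fix y assume "y \<in> L_class (IS n) (sandwich a) x"
      hence y: "y \<in> IS n" and e: "I x = I y" using key by blast+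
      show "y \<in> {y \<in> IS n. ran y = ran x \<and> dom y \<subseteq> ran a}"
      proof (cases "y = x")
        case True thus ?thesis using y dx by simp
      next
        case False
        from fwd[OF y False e] have h: "ran y \<subseteq> RR a x" "ran x \<subseteq> RR a y" by simp_all
        have "dom y \<subseteq> ran a" using RR_ss[OF assms(3) h(1) y h(2)] .
        moreover have "ran y = ran x" using h RR_sub[of a x] RR_sub[of a y] by blast
        ultimately show ?thesis using y by simp
      qed
    next
      fix y assume "y \<in> {y \<in> IS n. ran y = ran x \<and> dom y \<subseteq> ran a}"
      hence y: "y \<in> IS n" "ran y = ran x" "dom y \<subseteq> ran a" by simp_all
      have R: "RR a y = ran x" "RR a x = ran x" using RR_eq[OF dx] RR_eq[OF y(3)] y(2) by simp_all
      have "x \<in> {z \<in> IS n. ran z \<subseteq> RR a y}" using assms(3) R by simp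
      moreover have "y \<in> {z \<in> IS n. ran z \<subseteq> RR a x}" using y R by simp
      ultimately have "I x = I y" unfolding I_def R by blast
      thus "y \<in> L_class (IS n) (sandwich a) x" using key y by blast
    qed
  next
    assume dx: "\<not> dom x \<subseteq> ran a"
    show "L_class (IS n) (sandwich a) x = {x}"
    proof (intro set_eqI iffI)
      fix y assume "y \<in> L_class (IS n) (sandwich a) x"
      hence y: "y \<in> IS n" and e: "I x = I y" using key by blast+
      show "y \<in> {x}"
      proof (rule ccontr)
        assume "y \<notin> {x}"
        hence "y \<noteq> x" by simp
        from fwd[OF y this e] have h: "ran y \<subseteq> RR a x" "ran x \<subseteq> RR a y" by simp_all
        from dx obtain j where j0: "j \<in> dom x" "j \<notin> ran a" by blast
        then obtain v where j: "x j = Some v" by blast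
        have "v \<in> ran x" using j by (auto simp: ran_def)
        hence "v \<in> ran y" using h(2) RR_sub[of a y] by blast
        hence "v \<in> RR a x" using h(1) by blast
        then obtain j' where j': "j' \<in> ran a" "x j' = Some v" by (auto simp: RR_def)
        have "j = j'" using inj_dom[OF assms(3) j j'(2)] .
        with j0 j' show False by simp
      qed
    next
      fix y assume "y \<in> {x}"
      hence "y = x" by simp
      thus "y \<in> L_class (IS n) (sandwich a) x" using key assms(3) by blast
    qed
  qed
qed

end
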